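(* Let $A=(i_1,\dots,i_a)$ be an ordered tuple of distinct elements of $I_d$, $\alpha\in\mathbb{Z}_2^{a,\mathrm{ev}}$, $j\in I_a$, and $r\ge0$. Then in $R_l[x_1,\dots,x_d]=R[x_1,\dots,x_d]/(x_1^l,\dots,x_d^l)$, $$x_{i_j}\,h^\alpha_r(A)=(-1)^{\alpha_j}\,h^\alpha_r(A)\,x_{\sigma_A(i_j)}.$$
   Context: $l,d\ge1$, $R$ a commutative ring, $I_a=\{1,\dots,a\}$. For an ordered tuple $A=(i_1,\dots,i_a)$ of distinct elements of $I_d$, $\sigma_A$ is the cyclic permutation $i_1\mapsto i_2\mapsto\dots\mapsto i_a\mapsto i_1$. For $\alpha\in\mathbb{Z}_2^a$, $|\alpha|=\sum_j\alpha_j$, $\mathbb{Z}_2^{a,\mathrm{ev}}$ is the set of $\alpha$ with $|\alpha|$ even, and $\epsilon^\alpha_j=\prod_{k<j}(-1)^{\alpha_k}$ (so $\epsilon^\alpha_1=1$). For $r\ge0$ and $\alpha\in\mathbb{Z}_2^{a,\mathrm{ev}}$, $h^\alpha_r(A)=\sum_{r_1+\dots+r_a=(a-1)(l-1)+r,\ r_j\ge0}\prod_{j=1}^a(\epsilon^\alpha_jx_{i_j})^{r_j}\in R_l[x_1,\dots,x_d]$. *)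

theory Defs
  imports Main "HOL-Library.Poly_Mapping"
begin

type_synonym 'a mpoly = "(nat \<Rightarrow>\<^sub>0 nat) \<Rightarrow>\<^sub>0 'a"

definition Var :: "nat \<Rightarrow> 'a::comm_ring_1 mpoly" where
  "Var k = Poly_Mapping.single (Poly_Mapping.single k 1) 1"

text \<open>Equality in R_l[x_1..x_d] = R[x_1..x_d]/(x_1^l,...,x_d^l):
  the difference lies in the ideal generated by x_1^l, ..., x_d^l.\<close>
definition eq_trunc :: "nat \<Rightarrow> nat \<Rightarrow> 'a::comm_ring_1 mpoly \<Rightarrow> 'a mpoly \<Rightarrow> bool" where
  "eq_trunc l d p q \<longleftrightarrow> (\<exists>g. p - q = (\<Sum>k\<in>{1..d}. g k * Var k ^ l))"

text \<open>Sign epsilon^alpha_j, with 0-based index j (j = 0 is the paper's j = 1).\<close>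
definition eps :: "nat list \<Rightarrow> nat \<Rightarrow> int" where
  "eps \<alpha> j = (\<Prod>k<j. (-1) ^ (\<alpha> ! k))"

text \<open>h^alpha_r(A), as a polynomial (its class in R_l[x] is meant).\<close>
definition hpoly :: "nat \<Rightarrow> nat list \<Rightarrow> nat list \<Rightarrow> nat \<Rightarrow> 'a::comm_ring_1 mpoly" where
  "hpoly l \<alpha> A r =
     (\<Sum>rs\<in>{rs. length rs = length A \<and> sum_list rs = (length A - 1) * (l - 1) + r}.
        \<Prod>j<length A. (of_int (eps \<alpha> j) * Var (A ! j)) ^ (rs ! j))"

definition sigmaA :: "nat list \<Rightarrow> nat \<Rightarrow> nat" where
  "sigmaA A i = (if i \<in> set A then A ! (((THE j. j < length A \<and> A ! j = i) + 1) mod length A) else i)"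

end

theory Submission
  imports Defs
begin

definition inI :: "nat \<Rightarrow> nat \<Rightarrow> 'a::comm_ring_1 mpoly \<Rightarrow> bool" where
  "inI l d p \<longleftrightarrow> (\<exists>g. p = (\<Sum>k\<in>{1..d}. g k * Var k ^ l))"

lemma inI_0: "inI l d 0"
  unfolding inI_def by (rule exI[of _ "\<lambda>_. 0"]) simp

lemma inI_add: "inI l d p \<Longrightarrow> inI l d q \<Longrightarrow> inI l d (p + q)"
  unfolding inI_def
proof (elim exE)
  fix g h assume "p = (\<Sum>k\<in>{1..d}. g k * Var k ^ l)" "q = (\<Sum>k\<in>{1..d}. h k * Var k ^ l)"
  then show "\<exists>g. p + q = (\<Sum>k\<in>{1..d}. g k * Var k ^ l)"
    by (intro exI[of _ "\<lambda>k. g k + h k"]) (simp add: sum.distrib distrib_right)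
qed

lemma inI_mult: "inI l d p \<Longrightarrow> inI l d (c * p)"
  unfolding inI_def
proof (elim exE)
  fix g assume "p = (\<Sum>k\<in>{1..d}. g k * Var k ^ l)"
  then show "\<exists>g. c * p = (\<Sum>k\<in>{1..d}. g k * Var k ^ l)"
    by (intro exI[of _ "\<lambda>k. c * g k"]) (simp add: sum_distrib_left mult.assoc)
qed

lemma inI_neg: "inI l d p \<Longrightarrow> inI l d (- p)"
  using inI_mult[of l d p "-1"] by simp

lemma inI_diff: "inI l d p \<Longrightarrow> inI l d q \<Longrightarrow> inI l d (p - q)"
  using inI_add[of l d p "-q"] inI_neg[of l d q] by simp

lemma inI_sum: "finite S \<Longrightarrow> (\<And>x. x \<in> S \<Longrightarrow> inI l d (f x)) \<Longrightarrow> inI l d (\<Sum>x\<in>S. f x)"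
  by (induction S rule: finite_induct) (auto intro: inI_0 inI_add)

lemma inI_gen: "k \<in> {1..d} \<Longrightarrow> inI l d (c * Var k ^ l)"
  unfolding inI_def
proof (intro exI[of _ "\<lambda>i. if i = k then c else 0"])
  assume k: "k \<in> {1..d}"
  have "(\<Sum>i\<in>{1..d}. (if i = k then c else 0) * Var i ^ l) = (\<Sum>i\<in>{1..d}. if i = k then c * Var k ^ l else 0)"
    by (intro sum.cong) auto
  also have "\<dots> = c * Var k ^ l" using k by (simp add: sum.delta)
  finally show "c * Var k ^ l = (\<Sum>i\<in>{1..d}. (if i = k then c else 0) * Var i ^ l)" by simp
qed

definition yv :: "nat list \<Rightarrow> nat list \<Rightarrow> nat \<Rightarrow> 'a::comm_ring_1 mpoly" where
  "yv \<alpha> A t = of_int (eps \<alpha> t) * Var (A ! t)"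

definition Pm :: "nat list \<Rightarrow> nat list \<Rightarrow> nat list \<Rightarrow> 'a::comm_ring_1 mpoly" where
  "Pm \<alpha> A m = (\<Prod>t<length A. yv \<alpha> A t ^ (m ! t))"

definition Sset :: "nat \<Rightarrow> nat \<Rightarrow> nat list set" where
  "Sset a n = {rs. length rs = a \<and> sum_list rs = n}"

lemma finite_Sset: "finite (Sset a n)"
proof (rule finite_subset)
  show "Sset a n \<subseteq> {xs. set xs \<subseteq> {0..n} \<and> length xs = a}"
    unfolding Sset_def using member_le_sum_list by fastforce
  show "finite {xs. set xs \<subseteq> {0..n} \<and> length xs = a}"
    by (rule finite_lists_length_eq) simp
qed

lemma hpoly_eq: "hpoly l \<alpha> A r = sum (Pm \<alpha> A) (Sset (length A) ((length A - 1) * (l - 1) + r))"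
  unfolding hpoly_def Pm_def yv_def Sset_def by simp

lemma Pm_shift:
  assumes "j < length A" "length m = length A"
  shows "yv \<alpha> A j * Pm \<alpha> A m = Pm \<alpha> A (m[j := Suc (m ! j)])"
proof -
  have "Pm \<alpha> A (m[j := Suc (m ! j)]) = (\<Prod>t<length A. yv \<alpha> A t ^ (m ! t) * (if t = j then yv \<alpha> A t else 1))"
    unfolding Pm_def using assms by (intro prod.cong) (auto simp: nth_list_update)
  also have "\<dots> = Pm \<alpha> A m * yv \<alpha> A j"
    unfolding prod.distrib Pm_def using assms by (simp add: prod.delta)
  finally show ?thesis by (metis mult.commute)
qed

lemma sum_shift:
  assumes "j < a" "length A = a"
  shows "yv \<alpha> A j * sum (Pm \<alpha> A) (Sset a n) = sum (Pm \<alpha> A) {m \<in> Sset a (Suc n). 1 \<le> m ! j}"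
  unfolding sum_distrib_left
proof (rule sum.reindex_bij_witness[where i = "\<lambda>m. m[j := m ! j - 1]" and j = "\<lambda>m. m[j := Suc (m ! j)]"])
  fix m assume "m \<in> Sset a n"
  then show "(m[j := Suc (m ! j)])[j := (m[j := Suc (m ! j)]) ! j - 1] = m"
    using assms unfolding Sset_def by simp
  show "m[j := Suc (m ! j)] \<in> {m \<in> Sset a (Suc n). 1 \<le> m ! j}"
    using \<open>m \<in> Sset a n\<close> assms unfolding Sset_def by (auto simp: sum_list_update)
  show "Pm \<alpha> A (m[j := Suc (m ! j)]) = yv \<alpha> A j * Pm \<alpha> A m"
    using \<open>m \<in> Sset a n\<close> assms unfolding Sset_def by (simp add: Pm_shift)
next
  fix m assume m: "m \<in> {m \<in> Sset a (Suc n). 1 \<le> m ! j}"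
  then show "(m[j := m ! j - 1])[j := Suc ((m[j := m ! j - 1]) ! j)] = m"
    using assms unfolding Sset_def by auto
  have "m ! j \<le> sum_list m" using m assms elem_le_sum_list[of j m] unfolding Sset_def by auto
  then show "m[j := m ! j - 1] \<in> Sset a n"
    using m assms unfolding Sset_def by (auto simp: sum_list_update)
qed

lemma pigeon:
  assumes "length m = a" "sum_list m = (a - 1) * (l - 1) + r + 1" "k < a" "m ! k = 0"
  shows "\<exists>t<a. l \<le> m ! t"
proof (rule ccontr)
  assume "\<not> ?thesis"
  hence le: "\<And>t. t < a \<Longrightarrow> m ! t \<le> l - 1" by force
  have "sum_list m = (\<Sum>t\<in>{0..<a}. m ! t)" using assms(1) by (simp add: sum_list_sum_nth)
  also have "\<dots> = (\<Sum>t\<in>{0..<a} - {k}. m ! t)"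
    using assms(3,4) by (intro sum.mono_neutral_right) auto
  also have "\<dots> \<le> card ({0..<a} - {k}) * (l - 1)"
    using sum_bounded_above[of "{0..<a}-{k}" "(!) m" "l-1"] le by auto
  also have "\<dots> = (a - 1) * (l - 1)" using assms(3) by simp
  finally show False using assms(2) by simp
qed

lemma Pm_inI:
  assumes "length A = a" "set A \<subseteq> {1..d}" "t < a" "l \<le> m ! t"
  shows "inI l d (Pm \<alpha> A m :: 'a::comm_ring_1 mpoly)"
proof -
  obtain e where e: "m ! t = e + l" using assms(4) le_Suc_ex by (metis add.commute)
  define Q :: "'a mpoly" where "Q = (\<Prod>s\<in>{..<length A} - {t}. yv \<alpha> A s ^ (m ! s))"
  have "Pm \<alpha> A m = yv \<alpha> A t ^ (m ! t) * Q"
    unfolding Pm_def Q_def using assms by (intro prod.remove) auto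
  also have "yv \<alpha> A t ^ (m ! t) = (yv \<alpha> A t ^ e * of_int (eps \<alpha> t) ^ l) * Var (A ! t) ^ l"
    by (simp only: e power_add yv_def power_mult_distrib mult.assoc)
  finally have PE: "Pm \<alpha> A m = (Q * (yv \<alpha> A t ^ e * of_int (eps \<alpha> t) ^ l)) * Var (A ! t) ^ l"
    by (simp only: ac_simps)
  have "A ! t \<in> {1..d}" using assms(1,2,3) nth_mem by blast
  then show ?thesis unfolding PE by (rule inI_gen)
qed

lemma key:
  assumes "length A = a" "set A \<subseteq> {1..d}" "j < a" "k < a"
  shows "inI l d (yv \<alpha> A j * sum (Pm \<alpha> A) (Sset a ((a - 1) * (l - 1) + r))
                 - yv \<alpha> A k * sum (Pm \<alpha> A) (Sset a ((a - 1) * (l - 1) + r)) :: 'a::comm_ring_1 mpoly)"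
proof -
  define N where "N = (a - 1) * (l - 1) + r"
  have "yv \<alpha> A j * sum (Pm \<alpha> A) (Sset a N) - yv \<alpha> A k * sum (Pm \<alpha> A) (Sset a N)
     = (\<Sum>m\<in>Sset a (Suc N). (if 1 \<le> m ! j then Pm \<alpha> A m else 0) - (if 1 \<le> m ! k then Pm \<alpha> A m else (0::'a mpoly)))"
    unfolding sum_shift[OF assms(3,1)] sum_shift[OF assms(4,1)] sum_subtractf
    by (simp add: sum.inter_filter[OF finite_Sset])
  also have "inI l d \<dots>"
  proof (rule inI_sum[OF finite_Sset])
    fix m assume m: "m \<in> Sset a (Suc N)"
    then have lm: "length m = a" and sm: "sum_list m = (a - 1) * (l - 1) + r + 1"
      unfolding Sset_def N_def by auto
    show "inI l d ((if 1 \<le> m ! j then Pm \<alpha> A m else 0) - (if 1 \<le> m ! k then Pm \<alpha> A m else (0::'a mpoly)))"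
    proof (cases "1 \<le> m ! j \<longleftrightarrow> 1 \<le> m ! k")
      case True then show ?thesis by (auto simp: inI_0)
    next
      case False
      show ?thesis
      proof (cases "1 \<le> m ! j")
        case True
        with False have "m ! k = 0" by simp
        from pigeon[OF lm sm assms(4) this] obtain t where "t < a" "l \<le> m ! t" by blast
        then have "inI l d (Pm \<alpha> A m :: 'a mpoly)" using Pm_inI assms(1,2) by blast
        then show ?thesis using True False by simp
      next
        case F2: False
        then have "m ! j = 0" by simp
        from pigeon[OF lm sm assms(3) this] obtain t where "t < a" "l \<le> m ! t" by blast
        then have "inI l d (Pm \<alpha> A m :: 'a mpoly)" using Pm_inI assms(1,2) by blast
        then show ?thesis using F2 False inI_neg by fastforce
      qed
    qed
  qed
  finally show ?thesis unfolding N_def .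
qed

lemma sq1: "((-1::int) ^ n) * (-1) ^ n = 1"
  by (simp add: power_mult_distrib[symmetric])

lemma eps_sq: "eps \<alpha> j * eps \<alpha> j = 1"
  unfolding eps_def prod.distrib[symmetric] sq1 by simp

lemma eps_Suc: "eps \<alpha> (Suc j) = eps \<alpha> j * (-1) ^ (\<alpha> ! j)"
  unfolding eps_def by simp

lemma eps_full: "even (sum_list \<alpha>) \<Longrightarrow> eps \<alpha> (length \<alpha>) = 1"
  unfolding eps_def power_sum[symmetric] sum_list_sum_nth atLeast0LessThan
  by simp

theorem mainTheorem11:
  fixes l d r j :: nat and A \<alpha> :: "nat list"
  assumes "l \<ge> 1" and "d \<ge> 1"
    and "A \<noteq> []" and "distinct A" and "set A \<subseteq> {1..d}"
    and "length \<alpha> = length A" and "\<forall>x\<in>set \<alpha>. x < 2" and "even (sum_list \<alpha>)"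
    and "j < length A"
  shows "eq_trunc l d
           (Var (A ! j) * (hpoly l \<alpha> A r :: 'a::comm_ring_1 mpoly))
           (of_int ((-1) ^ (\<alpha> ! j)) * hpoly l \<alpha> A r * Var (sigmaA A (A ! j)))"
proof -
  define a where "a = length A"
  define k where "k = Suc j mod a"
  have ka: "k < a" using assms(9) unfolding k_def a_def by (intro mod_less_divisor) auto
  have "(THE i. i < length A \<and> A ! i = A ! j) = j"
    using assms(4,9) by (auto simp: nth_eq_iff_index_eq)
  then have sig: "sigmaA A (A ! j) = A ! k"
    unfolding sigmaA_def k_def a_def using assms(9) by simp
  define e where "e = eps \<alpha> j"
  define s where "s = ((-1::int) ^ (\<alpha> ! j))"
  have ek: "eps \<alpha> k = e * s"
  proof (cases "Suc j < a")
    case True then show ?thesis unfolding k_def e_def s_def by (simp add: eps_Suc)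
  next
    case False
    then have "Suc j = a" using assms(9) a_def by simp
    then have "k = 0" unfolding k_def by simp
    moreover have "e * s = 1" using eps_full[OF assms(8)] eps_Suc[of \<alpha> j] \<open>Suc j = a\<close> assms(6)
      unfolding e_def s_def a_def by simp
    ultimately show ?thesis by (simp add: eps_def)
  qed
  have ee: "e * e = 1" unfolding e_def by (rule eps_sq)
  have ss: "s * s = 1" unfolding s_def by (rule sq1)
  define h where "h = (hpoly l \<alpha> A r :: 'a mpoly)"
  have vj: "Var (A ! j) = (of_int e :: 'a mpoly) * yv \<alpha> A j"
  proof -
    have "(of_int e :: 'a mpoly) * yv \<alpha> A j = of_int (e * e) * Var (A ! j)"
      unfolding yv_def e_def by (simp add: mult.assoc)
    then show ?thesis using ee by simp
  qed
  have vk: "Var (A ! k) = (of_int (e * s) :: 'a mpoly) * yv \<alpha> A k"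
  proof -
    have "(of_int (e * s) :: 'a mpoly) * yv \<alpha> A k = of_int ((e * s) * (e * s)) * Var (A ! k)"
      unfolding yv_def ek by (simp add: mult.assoc)
    also have "(e * s) * (e * s) = (e * e) * (s * s)" by (simp add: ac_simps)
    finally show ?thesis using ee ss by simp
  qed
  have "Var (A ! j) * h - of_int s * h * Var (A ! k)
      = of_int e * (yv \<alpha> A j * h - yv \<alpha> A k * h)"
  proof -
    have "of_int s * h * Var (A ! k) = of_int (s * s * e) * (yv \<alpha> A k * h)"
      unfolding vk by (simp add: ac_simps)
    also have "\<dots> = of_int e * (yv \<alpha> A k * h)" using ss by simp
    finally show ?thesis unfolding vj by (simp add: algebra_simps)
  qed
  moreover have "inI l d (yv \<alpha> A j * h - yv \<alpha> A k * h)"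
    unfolding h_def hpoly_eq a_def[symmetric]
    using key[OF a_def[symmetric] assms(5) _ ka] assms(9) a_def by blast
  ultimately have "inI l d (Var (A ! j) * h - of_int s * h * Var (A ! k))"
    using inI_mult by metis
  then show ?thesis unfolding eq_trunc_def inI_def h_def s_def sig by simp
qed

end
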